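(* The poset $\mathcal{FP}^c$ of nonempty faces of the Voronoi cell $V^c_O$ of the origin for the lattice of integer cuts $L\subset K$ (with respect to $q$), ordered by inclusion, is isomorphic to the poset $\mathcal{CAC}$ of coherent acyclic orientations of cut subgraphs of $G$.
   Context: $G=(V,E)$ is a finite connected graph (parallel edges allowed); each edge gives oriented edges $e,\bar e$, $\mathbb E$ the set of oriented edges. Real $1$-cochains are $x:\mathbb E\to\mathbb R$ with $x_{\bar e}=-x_e$, with $\langle x,y\rangle=\sum_{e\in E}x_ey_e$ and $q(x)=\langle x,x\rangle$. For $f:V\to\mathbb R$, $d(f)(e)=f(u)-f(v)$ where $u$ is the head and $v$ the tail of $e$. $K=\{d(f): f:V\to\mathbb R\}$ and $L=\{d(f): f:V\to\mathbb Z\}$ (the lattice of integer cuts). $V^c_\lambda=\{x\in K: q(x-\lambda)\le q(x-\mu)\ \forall\mu\in L\}$. A subgraph $H'$ is a cut subgraph if there is a partition $V_1,\dots,V_s$ of $V$ such that $H'$ consists exactly of the edges joining different parts. An orientation of such $H'$ is coherent acyclic if for some such partition defining $H'$ every edge between $V_i$ and $V_j$, $i<j$, is oriented from $V_i$ to $V_j$. $\mathcal{CAC}$ is the set of coherent acyclic orientations of cut subgraphs (including the empty one, $s=1$), with $D_1\preceq D_2$ iff $D_2\subseteq D_1$ (i.e. the subgraph of $D_2$ is contained in that of $D_1$ and the orientations agree). *)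

theory Defs
  imports "HOL-Analysis.Analysis"
begin

text \<open>A finite graph (parallel edges and loops allowed) is given by a finite vertex type 'v,
  a finite edge type 'e and functions hed, tal assigning head and tail to each edge.
  Real 1-cochains are identified with their values on the chosen orientation e of each
  edge, i.e. with vectors in real^'e (x on the reversed edge is -x).\<close>

definition graph_connected :: "('e \<Rightarrow> 'v) \<Rightarrow> ('e \<Rightarrow> 'v) \<Rightarrow> bool" where
  "graph_connected hed tal \<longleftrightarrow>
     (\<forall>u v. (u, v) \<in> ({(hed e, tal e) | e. True} \<union> {(tal e, hed e) | e. True})\<^sup>*)"

definition qf :: "real^'e::finite \<Rightarrow> real" where
  "qf x = (\<Sum>e\<in>UNIV. (x $ e)^2)"

definition cobound :: "('e::finite \<Rightarrow> 'v) \<Rightarrow> ('e \<Rightarrow> 'v) \<Rightarrow> ('v \<Rightarrow> real) \<Rightarrow> real^'e" where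
  "cobound hed tal f = (\<chi> e. f (hed e) - f (tal e))"

definition cut_space :: "('e::finite \<Rightarrow> 'v) \<Rightarrow> ('e \<Rightarrow> 'v) \<Rightarrow> (real^'e) set" where
  "cut_space hed tal = {cobound hed tal f | f. True}"

definition integer_cuts :: "('e::finite \<Rightarrow> 'v) \<Rightarrow> ('e \<Rightarrow> 'v) \<Rightarrow> (real^'e) set" where
  "integer_cuts hed tal = {cobound hed tal (\<lambda>v. real_of_int (f v)) | f. True}"

definition voronoi_cell :: "('e::finite \<Rightarrow> 'v) \<Rightarrow> ('e \<Rightarrow> 'v) \<Rightarrow> real^'e \<Rightarrow> (real^'e) set" where
  "voronoi_cell hed tal lam =
     {x \<in> cut_space hed tal. \<forall>\<mu>\<in>integer_cuts hed tal. qf (x - lam) \<le> qf (x - \<mu>)}"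

text \<open>Oriented edges: (e, True) is e itself (from tail to head), (e, False) is its reverse.\<close>
definition oe_tail :: "('e \<Rightarrow> 'v) \<Rightarrow> ('e \<Rightarrow> 'v) \<Rightarrow> 'e \<times> bool \<Rightarrow> 'v" where
  "oe_tail hed tal oe = (if snd oe then tal (fst oe) else hed (fst oe))"

definition oe_head :: "('e \<Rightarrow> 'v) \<Rightarrow> ('e \<Rightarrow> 'v) \<Rightarrow> 'e \<times> bool \<Rightarrow> 'v" where
  "oe_head hed tal oe = (if snd oe then hed (fst oe) else tal (fst oe))"

text \<open>An orientation of a subgraph is a set of oriented edges.\<close>
definition coherent_acyclic :: "('e \<Rightarrow> 'v) \<Rightarrow> ('e \<Rightarrow> 'v) \<Rightarrow> ('e \<times> bool) set \<Rightarrow> bool" where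
  "coherent_acyclic hed tal D \<longleftrightarrow>
     (\<exists>P :: 'v set list. P \<noteq> [] \<and> (\<forall>i<length P. P ! i \<noteq> {}) \<and>
        (\<forall>i<length P. \<forall>j<length P. i \<noteq> j \<longrightarrow> P ! i \<inter> P ! j = {}) \<and>
        \<Union>(set P) = UNIV \<and>
        D = {oe. \<exists>i j. i < j \<and> j < length P \<and> oe_tail hed tal oe \<in> P ! i \<and> oe_head hed tal oe \<in> P ! j})"

definition CAC :: "('e \<Rightarrow> 'v) \<Rightarrow> ('e \<Rightarrow> 'v) \<Rightarrow> ('e \<times> bool) set set" where
  "CAC hed tal = {D. coherent_acyclic hed tal D}"

definition cac_le :: "('e \<times> bool) set \<Rightarrow> ('e \<times> bool) set \<Rightarrow> bool" where
  "cac_le D1 D2 \<longleftrightarrow> D2 \<subseteq> D1"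

definition nonempty_faces :: "(real^'e::finite) set \<Rightarrow> (real^'e) set set" where
  "nonempty_faces S = {F. F face_of S \<and> F \<noteq> {}}"

end

theory Submission imports Defs begin

definition isproj :: "(real^'e::finite) set \<Rightarrow> (real^'e \<Rightarrow> real^'e) \<Rightarrow> bool" where
  "isproj K P \<longleftrightarrow> linear P \<and> (\<forall>x. P x \<in> K) \<and> (\<forall>x k. k \<in> K \<longrightarrow> (x - P x) \<bullet> k = 0)"

lemma proj_exists:
  fixes K :: "(real^'e::finite) set"
  assumes sK: "subspace K"
  shows "\<exists>P. isproj K P"
proof -
  have ex: "\<exists>y. y \<in> K \<and> (\<forall>w\<in>K. (x - y) \<bullet> w = 0)" for x
  proof -
    obtain y z where "y \<in> span K" "\<And>w. w \<in> span K \<Longrightarrow> orthogonal z w" "x = y + z"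
      using orthogonal_subspace_decomp_exists[of K x] by blast
    moreover have "span K = K" using sK by (simp add: span_eq_iff)
    ultimately show ?thesis by (intro exI[of _ y]) (auto simp: orthogonal_def)
  qed
  have uniq: "y = y'" if "y \<in> K" "\<forall>w\<in>K. (x - y) \<bullet> w = 0" "y' \<in> K" "\<forall>w\<in>K. (x - y') \<bullet> w = 0" for x y y'
  proof -
    have d: "y' - y \<in> K" using that sK subspace_diff by blast
    have "(x - y) \<bullet> (y' - y) - (x - y') \<bullet> (y' - y) = 0" using that d by simp
    then have "(y' - y) \<bullet> (y' - y) = 0" by (simp add: inner_diff_left)
    then show ?thesis by simp
  qed
  define P where "P x = (SOME y. y \<in> K \<and> (\<forall>w\<in>K. (x - y) \<bullet> w = 0))" for x
  have P: "P x \<in> K \<and> (\<forall>w\<in>K. (x - P x) \<bullet> w = 0)" for x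
    unfolding P_def using someI_ex[OF ex[of x]] by blast
  have lin: "linear P"
  proof (rule linearI)
    fix b1 b2
    have "P b1 + P b2 \<in> K" using P sK subspace_add by blast
    moreover have "\<forall>w\<in>K. (b1 + b2 - (P b1 + P b2)) \<bullet> w = 0"
    proof
      fix w assume "w \<in> K"
      then have "(b1 - P b1) \<bullet> w + (b2 - P b2) \<bullet> w = 0" using P by simp
      then show "(b1 + b2 - (P b1 + P b2)) \<bullet> w = 0" by (simp add: algebra_simps inner_diff_left inner_add_left)
    qed
    ultimately show "P (b1 + b2) = P b1 + P b2" using uniq P by blast
  next
    fix r b
    have "r *\<^sub>R P b \<in> K" using P sK subspace_scale by blast
    moreover have "\<forall>w\<in>K. (r *\<^sub>R b - r *\<^sub>R P b) \<bullet> w = 0"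
    proof
      fix w assume "w \<in> K"
      then have "(b - P b) \<bullet> w = 0" using P by simp
      then show "(r *\<^sub>R b - r *\<^sub>R P b) \<bullet> w = 0"
        by (metis inner_scaleR_left mult_zero_right scaleR_right_diff_distrib)
    qed
    ultimately show "P (r *\<^sub>R b) = r *\<^sub>R P b" using uniq P by blast
  qed
  show ?thesis unfolding isproj_def using lin P by blast
qed

context
  fixes hed tal :: "'e::finite \<Rightarrow> 'v::finite"
begin

lemma cobound_nth[simp]: "cobound hed tal f $ e = f (hed e) - f (tal e)"
  by (simp add: cobound_def)

lemma subspace_K: "subspace (cut_space hed tal)"
  unfolding subspace_def cut_space_def
proof (intro conjI allI impI ballI)
  show "0 \<in> {cobound hed tal f |f. True}"
    by (rule CollectI, rule exI[of _ "\<lambda>_. 0"]) (simp add: vec_eq_iff)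
next
  fix x y assume "x \<in> {cobound hed tal f |f. True}" "y \<in> {cobound hed tal f |f. True}"
  then obtain f g where "x = cobound hed tal f" "y = cobound hed tal g" by auto
  then show "x + y \<in> {cobound hed tal f |f. True}"
    by (intro CollectI exI[of _ "\<lambda>v. f v + g v"]) (simp add: vec_eq_iff)
next
  fix c x assume "x \<in> {cobound hed tal f |f. True}"
  then obtain f where "x = cobound hed tal f" by auto
  then show "c *\<^sub>R x \<in> {cobound hed tal f |f. True}"
    by (intro CollectI exI[of _ "\<lambda>v. c * f v"]) (auto simp: vec_eq_iff algebra_simps, metis distrib_left add_diff_cancel_right')
qed


lemma qf_inner: "qf x = x \<bullet> x"
  by (simp add: qf_def inner_vec_def power2_eq_square)

lemma sum_abs_inner: "x \<bullet> y = (\<Sum>e\<in>UNIV. x $ e * y $ e)"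
  by (simp add: inner_vec_def)

lemma V_sub_K: "x \<in> voronoi_cell hed tal 0 \<Longrightarrow> x \<in> cut_space hed tal"
  by (simp add: voronoi_cell_def)

lemma ind_ineq:
  assumes x: "x \<in> voronoi_cell hed tal 0"
  shows "2 * (cobound hed tal (\<lambda>v. if v \<in> S then 1 else 0) \<bullet> x)
     \<le> (\<Sum>e\<in>UNIV. \<bar>cobound hed tal (\<lambda>v. if v \<in> S then 1 else 0) $ e\<bar>)"
proof -
  define \<mu> where "\<mu> = cobound hed tal (\<lambda>v. if v \<in> S then 1 else 0)"
  have "\<mu> \<in> integer_cuts hed tal"
    unfolding integer_cuts_def \<mu>_def
    by (rule CollectI, rule exI[of _ "\<lambda>v. if v \<in> S then 1 else 0"]) (simp add: vec_eq_iff)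
  with x have "qf (x - 0) \<le> qf (x - \<mu>)" by (simp add: voronoi_cell_def)
  then have "x \<bullet> x \<le> x \<bullet> x - 2 * (\<mu> \<bullet> x) + \<mu> \<bullet> \<mu>"
    by (simp add: qf_inner inner_diff_left inner_diff_right inner_commute)
  moreover have "\<mu> \<bullet> \<mu> = (\<Sum>e\<in>UNIV. \<bar>\<mu> $ e\<bar>)"
    unfolding sum_abs_inner by (rule sum.cong) (auto simp: \<mu>_def)
  ultimately show ?thesis by (simp add: \<mu>_def)
qed

lemma abs_helper: "(p::real) * q \<ge> 0 \<Longrightarrow> k > 0 \<Longrightarrow> \<bar>k * p + q\<bar> = k * \<bar>p\<bar> + \<bar>q\<bar>"
proof (cases "p \<ge> 0")
  case True
  assume "p * q \<ge> 0" "k > 0"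
  then show ?thesis using True
    by (cases "p = 0") (auto simp: zero_le_mult_iff abs_mult)
next
  case False
  assume "p * q \<ge> 0" "k > 0"
  then have "q \<le> 0" using False by (auto simp: zero_le_mult_iff)
  moreover have "k * p < 0" using False \<open>k > 0\<close> by (simp add: mult_pos_neg)
  ultimately show ?thesis using False \<open>k > 0\<close> by (simp add: abs_mult abs_if)
qed

lemma L_ineq:
  assumes x: "x \<in> voronoi_cell hed tal 0"
  shows "2 * (cobound hed tal g \<bullet> x) \<le> (\<Sum>e\<in>UNIV. \<bar>cobound hed tal g $ e\<bar>)"
proof -
  have "\<And>g. card (range g) = n \<Longrightarrow> 2 * (cobound hed tal g \<bullet> x) \<le> (\<Sum>e\<in>UNIV. \<bar>cobound hed tal g $ e\<bar>)" for n
  proof (induction n rule: less_induct)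
    case (less n)
    fix g :: "'v \<Rightarrow> real"
    assume n: "card (range g) = n"
    show "2 * (cobound hed tal g \<bullet> x) \<le> (\<Sum>e\<in>UNIV. \<bar>cobound hed tal g $ e\<bar>)"
    proof (cases "\<forall>v w. g v = g w")
      case True
      then have "cobound hed tal g = 0" by (simp add: vec_eq_iff)
      then show ?thesis by simp
    next
      case False
      then obtain v0 w0 where vw: "g v0 \<noteq> g w0" by blast
      define m where "m = Min (range g)"
      have fin: "finite (range g)" by simp
      have mle: "m \<le> g v" for v unfolding m_def using fin by (intro Min_le) auto
      have min: "m \<in> range g" unfolding m_def using fin by (intro Min_in) auto
      define S where "S = {v. m < g v}"
      have Sne: "S \<noteq> {}" using vw mle unfolding S_def
        by (metis (mono_tags, lifting) empty_Collect_eq order_less_le)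
      define a where "a = Min (g ` S)"
      have aS: "a \<in> g ` S" unfolding a_def using Sne by (intro Min_in) auto
      have ale: "v \<in> S \<Longrightarrow> a \<le> g v" for v unfolding a_def by (intro Min_le) auto
      have am: "m < a" using aS S_def by auto
      define g' where "g' v = (if m < g v then g v - a else 0)" for v
      define h where "h t = (if m < t then t - a else 0)" for t
      have rg': "range g' = h ` range g" by (auto simp: g'_def h_def image_iff)
      have ninj: "\<not> inj_on h (range g)"
      proof
        assume "inj_on h (range g)"
        moreover have "h m = h a" by (simp add: h_def am)
        moreover have "a \<in> range g" using aS by auto
        ultimately show False using min am by (metis inj_onD order_less_irrefl)
      qed
      have "card (range g') < n"
        using ninj n rg' card_image_le[OF fin, of h] eq_card_imp_inj_on[OF fin, of h] by (metis le_neq_implies_less)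
      then have IH: "2 * (cobound hed tal g' \<bullet> x) \<le> (\<Sum>e\<in>UNIV. \<bar>cobound hed tal g' $ e\<bar>)"
        using less by blast
      define \<mu> where "\<mu> = cobound hed tal (\<lambda>v. if v \<in> S then 1 else 0)"
      have I: "2 * (\<mu> \<bullet> x) \<le> (\<Sum>e\<in>UNIV. \<bar>\<mu> $ e\<bar>)"
        unfolding \<mu>_def by (rule ind_ineq[OF x])
      have gv: "g v = m + (a - m) * (if v \<in> S then 1 else 0) + g' v" for v
        using mle[of v] by (auto simp: S_def g'_def)
      have ce: "cobound hed tal g $ e = (a - m) * \<mu> $ e + cobound hed tal g' $ e" for e
        by (simp add: \<mu>_def gv[of "hed e"] gv[of "tal e"] algebra_simps)
      have ceabs: "\<bar>cobound hed tal g $ e\<bar> = (a - m) * \<bar>\<mu> $ e\<bar> + \<bar>cobound hed tal g' $ e\<bar>" for e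
      proof -
        have "\<mu> $ e * cobound hed tal g' $ e \<ge> 0"
          using ale[of "hed e"] ale[of "tal e"]
        proof -
          have g'S: "g' v = (if v \<in> S then g v - a else 0)" for v by (simp add: g'_def S_def)
          show ?thesis
            using ale[of "hed e"] ale[of "tal e"]
            by (cases "hed e \<in> S"; cases "tal e \<in> S") (simp_all add: \<mu>_def g'S)
        qed
        then show ?thesis unfolding ce using am by (intro abs_helper) auto
      qed
      have cv: "cobound hed tal g = (a - m) *\<^sub>R \<mu> + cobound hed tal g'"
        unfolding vec_eq_iff using ce by (simp del: cobound_nth)
      have "2 * (cobound hed tal g \<bullet> x) = (a - m) * (2 * (\<mu> \<bullet> x)) + 2 * (cobound hed tal g' \<bullet> x)"
        by (simp add: cv inner_add_left algebra_simps)
      also have "\<dots> \<le> (a - m) * (\<Sum>e\<in>UNIV. \<bar>\<mu> $ e\<bar>) + (\<Sum>e\<in>UNIV. \<bar>cobound hed tal g' $ e\<bar>)"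
        using I IH am by (intro add_mono mult_left_mono) auto
      also have "\<dots> = (\<Sum>e\<in>UNIV. \<bar>cobound hed tal g $ e\<bar>)"
        by (simp del: cobound_nth add: ceabs sum.distrib sum_distrib_left)
      finally show ?thesis .
    qed
  qed
  then show ?thesis by blast
qed


end

definition cube :: "(real^'e::finite) set" where "cube = {y. \<forall>e. \<bar>y$e\<bar> \<le> 1/2}"
definition cubeD :: "('e::finite \<times> bool) set \<Rightarrow> (real^'e) set" where
  "cubeD D = {y \<in> cube. \<forall>oe\<in>D. y $ fst oe = (if snd oe then 1/2 else -1/2)}"
definition sgnv :: "real^'e::finite \<Rightarrow> real^'e" where "sgnv c = (\<chi> e. sgn (c$e) / 2)"

lemma elem_le: "\<bar>y::real\<bar> \<le> 1/2 \<Longrightarrow> c * y \<le> \<bar>c\<bar>/2"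
proof -
  assume y: "\<bar>y\<bar> \<le> 1/2"
  have "c * y \<le> \<bar>c\<bar> * \<bar>y\<bar>" by (metis abs_ge_self abs_mult)
  also have "\<dots> \<le> \<bar>c\<bar> * (1/2)" using y by (intro mult_left_mono) auto
  finally show ?thesis by simp
qed

lemma elem_eq: "\<bar>y::real\<bar> \<le> 1/2 \<Longrightarrow> (\<bar>c\<bar>/2 - c * y = 0 \<longleftrightarrow> (c > 0 \<longrightarrow> y = 1/2) \<and> (c < 0 \<longrightarrow> y = -1/2))"
proof (cases "c > 0")
  case True
  then have "\<bar>c\<bar>/2 - c * y = c * (1/2 - y)" by (simp add: algebra_simps)
  then show ?thesis using True by simp
next
  case False
  show ?thesis
  proof (cases "c = 0")
    case False
    with \<open>\<not> c > 0\<close> have c: "c < 0" by simp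
    then have "\<bar>c\<bar>/2 - c * y = (-c) * (1/2 + y)" by (simp add: algebra_simps)
    then show ?thesis using c by auto
  qed simp
qed

lemma cube_le: "y \<in> cube \<Longrightarrow> c \<bullet> y \<le> (\<Sum>e\<in>UNIV. \<bar>c$e\<bar>)/2"
  unfolding inner_vec_def cube_def
  by (simp add: sum_divide_distrib) (intro sum_mono elem_le, auto)

lemma cube_eq: assumes "y \<in> cube"
  shows "c \<bullet> y = (\<Sum>e\<in>UNIV. \<bar>c$e\<bar>)/2 \<longleftrightarrow> (\<forall>e. (c$e > 0 \<longrightarrow> y$e = 1/2) \<and> (c$e < 0 \<longrightarrow> y$e = -1/2))"
proof -
  have y: "\<bar>y$e\<bar> \<le> 1/2" for e using assms by (auto simp: cube_def)
  have "(\<Sum>e\<in>UNIV. \<bar>c$e\<bar>)/2 - c \<bullet> y = (\<Sum>e\<in>UNIV. \<bar>c$e\<bar>/2 - c$e * y$e)"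
    by (simp add: inner_vec_def sum_divide_distrib sum_subtractf)
  moreover have "(\<Sum>e\<in>UNIV. \<bar>c$e\<bar>/2 - c$e * y$e) = 0 \<longleftrightarrow> (\<forall>e. \<bar>c$e\<bar>/2 - c$e * y$e = 0)"
    using sum_nonneg_eq_0_iff[of UNIV "\<lambda>e. \<bar>c$e\<bar>/2 - c$e * y$e"] elem_le[OF y] by auto
  ultimately have h: "(\<Sum>e\<in>UNIV. \<bar>c$e\<bar>)/2 - c \<bullet> y = 0 \<longleftrightarrow> (\<forall>e. \<bar>c$e\<bar>/2 - c$e * y$e = 0)"
    by simp
  have "(c \<bullet> y = (\<Sum>e\<in>UNIV. \<bar>c$e\<bar>)/2) = ((\<Sum>e\<in>UNIV. \<bar>c$e\<bar>)/2 - c \<bullet> y = 0)" by auto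
  also have "\<dots> = (\<forall>e. \<bar>c$e\<bar>/2 - c$e * y$e = 0)" by (rule h)
  also have "\<dots> = (\<forall>e. (c$e > 0 \<longrightarrow> y$e = 1/2) \<and> (c$e < 0 \<longrightarrow> y$e = -1/2))"
    using elem_eq[OF y] by simp
  finally show ?thesis .
qed

lemma sgnv_cube: "sgnv c \<in> cube"
  by (auto simp: sgnv_def cube_def sgn_if)

lemma sgnv_max: "c \<bullet> sgnv c = (\<Sum>e\<in>UNIV. \<bar>c$e\<bar>)/2"
proof -
  have "\<forall>e. (c$e > 0 \<longrightarrow> sgnv c$e = 1/2) \<and> (c$e < 0 \<longrightarrow> sgnv c$e = -1/2)"
    by (simp add: sgnv_def)
  then show ?thesis using cube_eq[OF sgnv_cube, of c] by blast
qed

lemma proj_inner: "isproj K P \<Longrightarrow> k \<in> K \<Longrightarrow> k \<bullet> P y = k \<bullet> y"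
proof -
  assume "isproj K P" "k \<in> K"
  then have "(y - P y) \<bullet> k = 0" by (simp add: isproj_def)
  then have "k \<bullet> (y - P y) = 0" by (simp add: inner_commute)
  then show ?thesis by (simp add: inner_diff_right)
qed

context
  fixes hed tal :: "'e::finite \<Rightarrow> 'v::finite"
begin

definition Dg :: "('v \<Rightarrow> real) \<Rightarrow> ('e \<times> bool) set" where
  "Dg g = {oe. g (oe_tail hed tal oe) < g (oe_head hed tal oe)}"

lemma Dg_char:
  assumes "y \<in> cube"
  shows "y \<in> cubeD (Dg g) \<longleftrightarrow> (\<forall>e. (cobound hed tal g $e > 0 \<longrightarrow> y$e = 1/2) \<and> (cobound hed tal g $e < 0 \<longrightarrow> y$e = -1/2))"
proof
  assume a: "y \<in> cubeD (Dg g)"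
  show "\<forall>e. (cobound hed tal g $e > 0 \<longrightarrow> y$e = 1/2) \<and> (cobound hed tal g $e < 0 \<longrightarrow> y$e = -1/2)"
  proof (intro allI conjI impI)
    fix e assume "cobound hed tal g $e > 0"
    then have "(e, True) \<in> Dg g" by (simp add: Dg_def oe_tail_def oe_head_def)
    then show "y$e = 1/2" using a unfolding cubeD_def by fastforce
  next
    fix e assume "cobound hed tal g $e < 0"
    then have "(e, False) \<in> Dg g" by (simp add: Dg_def oe_tail_def oe_head_def)
    then show "y$e = -1/2" using a unfolding cubeD_def by fastforce
  qed
next
  assume a: "\<forall>e. (cobound hed tal g $e > 0 \<longrightarrow> y$e = 1/2) \<and> (cobound hed tal g $e < 0 \<longrightarrow> y$e = -1/2)"
  have "y $ fst oe = (if snd oe then 1/2 else -1/2)" if "oe \<in> Dg g" for oe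
  proof (cases oe)
    case (Pair e b)
    show ?thesis
    proof (cases b)
      case True
      then have "cobound hed tal g $e > 0" using that Pair by (simp add: Dg_def oe_tail_def oe_head_def)
      then show ?thesis using a Pair True by simp
    next
      case False
      then have "cobound hed tal g $e < 0" using that Pair by (simp add: Dg_def oe_tail_def oe_head_def)
      then show ?thesis using a Pair False by simp
    qed
  qed
  then show "y \<in> cubeD (Dg g)" using assms by (simp add: cubeD_def)
qed

lemma P_cube_sub_V:
  assumes P: "isproj (cut_space hed tal) P" and y: "y \<in> cube"
  shows "P y \<in> voronoi_cell hed tal 0"
  unfolding voronoi_cell_def
proof (intro CollectI conjI ballI)
  show "P y \<in> cut_space hed tal" using P by (simp add: isproj_def)
  fix \<mu> assume "\<mu> \<in> integer_cuts hed tal"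
  then obtain f where \<mu>: "\<mu> = cobound hed tal (\<lambda>v. real_of_int (f v))"
    by (auto simp: integer_cuts_def)
  have muK: "\<mu> \<in> cut_space hed tal" by (auto simp: cut_space_def \<mu>)
  have "\<mu> \<bullet> P y = \<mu> \<bullet> y" by (rule proj_inner[OF P muK])
  have ints: "\<mu> $ e \<in> \<int>" for e by (simp add: \<mu>)
  have elem: "2 * (\<mu>$e * y$e) \<le> \<mu>$e * \<mu>$e" for e
  proof -
    obtain z where z: "\<mu>$e = of_int z" using ints[of e] Ints_cases by blast
    have zi: "\<bar>z\<bar> \<le> z * z"
    proof (cases "z = 0")
      case False
      then have "1 \<le> \<bar>z\<bar>" by linarith
      then have "\<bar>z\<bar> * 1 \<le> \<bar>z\<bar> * \<bar>z\<bar>" by (intro mult_left_mono) auto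
      then show ?thesis by (simp add: abs_mult_self_eq)
    qed simp
    have "\<bar>of_int z::real\<bar> \<le> of_int z * of_int z"
    proof -
      have "real_of_int \<bar>z\<bar> \<le> real_of_int (z * z)" using zi by (simp only: of_int_le_iff)
      then show ?thesis by simp
    qed
    moreover have "2 * (\<mu>$e * y$e) \<le> \<bar>\<mu>$e\<bar>"
      using elem_le[of "y$e" "\<mu>$e"] y by (auto simp: cube_def)
    ultimately show ?thesis using z by simp
  qed
  have "2 * (\<mu> \<bullet> y) \<le> \<mu> \<bullet> \<mu>"
    unfolding inner_vec_def sum_distrib_left by (intro sum_mono) (use elem in auto)
  moreover have "qf (P y - \<mu>) = qf (P y) - 2 * (\<mu> \<bullet> P y) + \<mu> \<bullet> \<mu>"
    unfolding qf_inner by (simp add: inner_diff_left inner_diff_right inner_commute[of "P y" \<mu>])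
  ultimately show "qf (P y - 0) \<le> qf (P y - \<mu>)"
    using \<open>\<mu> \<bullet> P y = \<mu> \<bullet> y\<close> by simp
qed


lemma Dg_mem: "(e, b) \<in> Dg g \<longleftrightarrow> (if b then cobound hed tal g $ e > 0 else cobound hed tal g $ e < 0)"
  by (simp add: Dg_def oe_tail_def oe_head_def)

lemma cube_cbox: "cube = cbox ((\<chi> e. -1/2)::real^'e::finite) (\<chi> e. 1/2)"
proof (rule set_eqI)
  fix x :: "real^'e"
  have "x \<in> cube \<longleftrightarrow> (\<forall>e. -(1/2) \<le> x$e \<and> x$e \<le> 1/2)"
  proof -
    have t: "\<And>t::real. \<bar>t\<bar> \<le> 1/2 \<longleftrightarrow> -(1/2) \<le> t \<and> t \<le> 1/2" by auto
    show ?thesis unfolding cube_def mem_Collect_eq t ..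
  qed
  moreover have "x \<in> cbox ((\<chi> e. -1/2)::real^'e::finite) (\<chi> e. 1/2) \<longleftrightarrow> (\<forall>e. -(1/2) \<le> x$e \<and> x$e \<le> 1/2)"
    by (simp only: mem_box_cart vec_lambda_beta minus_divide_left)
  ultimately show "x \<in> cube \<longleftrightarrow> x \<in> cbox ((\<chi> e. -1/2)::real^'e::finite) (\<chi> e. 1/2)" by simp
qed

lemma polytope_P_cube: fixes P :: "real^'e::finite \<Rightarrow> real^'e" shows "linear P \<Longrightarrow> polytope (P ` (cube :: (real^'e::finite) set))"
  unfolding cube_cbox by (intro polytope_linear_image polytope_interval)

lemma compact_P_cube: fixes P :: "real^'e::finite \<Rightarrow> real^'e" shows "linear P \<Longrightarrow> compact (P ` (cube :: (real^'e::finite) set))"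
proof -
  assume "linear P"
  then have "bounded_linear P" by (simp add: linear_conv_bounded_linear)
  then show ?thesis unfolding cube_cbox by (rule compact_continuous_image[OF linear_continuous_on compact_cbox])
qed

lemma convex_P_cube: fixes P :: "real^'e::finite \<Rightarrow> real^'e" shows "linear P \<Longrightarrow> convex (P ` (cube :: (real^'e::finite) set))"
  unfolding cube_cbox by (intro convex_linear_image) auto

lemma V_eq:
  assumes P: "isproj (cut_space hed tal) P"
  shows "voronoi_cell hed tal 0 = P ` cube"
proof
  show "P ` cube \<subseteq> voronoi_cell hed tal 0" using P_cube_sub_V[OF P] by blast
next
  show "voronoi_cell hed tal 0 \<subseteq> P ` cube"
  proof
    fix x assume x: "x \<in> voronoi_cell hed tal 0"
    show "x \<in> P ` cube"
    proof (rule ccontr)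
      assume nx: "x \<notin> P ` cube"
      have lin: "linear P" using P by (simp add: isproj_def)
      obtain a b where ab: "a \<bullet> x < b" "\<forall>z\<in>P ` cube. b < a \<bullet> z"
        using separating_hyperplane_closed_point[OF convex_P_cube[OF lin]
            compact_imp_closed[OF compact_P_cube[OF lin]] nx] by blast
      define c where "c = - P a"
      have PaK: "P a \<in> cut_space hed tal" using P by (simp add: isproj_def)
      have cK: "c \<in> cut_space hed tal" unfolding c_def using subspace_K PaK subspace_neg by blast
      then obtain g where g: "c = cobound hed tal g" by (auto simp: cut_space_def)
      have xK: "x \<in> cut_space hed tal" using x by (rule V_sub_K)
      have "x \<bullet> P a = x \<bullet> a" by (rule proj_inner[OF P xK])
      then have cx: "c \<bullet> x = - (a \<bullet> x)" by (simp add: c_def inner_commute)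
      define z where "z = P (sgnv c)"
      have zK: "z \<in> cut_space hed tal" using P by (simp add: isproj_def z_def)
      have "c \<bullet> z = c \<bullet> sgnv c" unfolding z_def by (rule proj_inner[OF P cK])
      then have cz: "c \<bullet> z = (\<Sum>e\<in>UNIV. \<bar>c$e\<bar>)/2" by (simp add: sgnv_max)
      have "z \<bullet> P a = z \<bullet> a" by (rule proj_inner[OF P zK])
      then have az: "a \<bullet> z = - (c \<bullet> z)" by (simp add: c_def inner_commute)
      have "b < a \<bullet> z" using ab(2) sgnv_cube z_def by blast
      moreover have "2 * (c \<bullet> x) \<le> (\<Sum>e\<in>UNIV. \<bar>c$e\<bar>)" unfolding g by (rule L_ineq[OF x])
      ultimately show False using ab(1) cx cz az by linarith
    qed
  qed
qed

lemma face_formula: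
  assumes P: "isproj (cut_space hed tal) P"
  shows "\<forall>x\<in>voronoi_cell hed tal 0. cobound hed tal g \<bullet> x \<le> (\<Sum>e\<in>UNIV. \<bar>cobound hed tal g $ e\<bar>)/2"
    and "voronoi_cell hed tal 0 \<inter> {x. cobound hed tal g \<bullet> x = (\<Sum>e\<in>UNIV. \<bar>cobound hed tal g $ e\<bar>)/2}
          = P ` cubeD (Dg g)"
proof -
  let ?c = "cobound hed tal g"
  let ?M = "(\<Sum>e\<in>UNIV. \<bar>cobound hed tal g $ e\<bar>)/2"
  have cK: "?c \<in> cut_space hed tal" by (auto simp: cut_space_def)
  have cy: "?c \<bullet> P y = ?c \<bullet> y" for y by (rule proj_inner[OF P cK])
  show "\<forall>x\<in>voronoi_cell hed tal 0. ?c \<bullet> x \<le> ?M"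
    unfolding V_eq[OF P] using cy cube_le by (auto simp del: cobound_nth)
  have eq: "y \<in> cube \<Longrightarrow> ?c \<bullet> y = ?M \<longleftrightarrow> y \<in> cubeD (Dg g)" for y
    using cube_eq[of y ?c] Dg_char[of y g] by simp
  have sub: "cubeD D \<subseteq> cube" for D by (auto simp: cubeD_def)
  show "voronoi_cell hed tal 0 \<inter> {x. ?c \<bullet> x = ?M} = P ` cubeD (Dg g)"
    unfolding V_eq[OF P]
  proof
    show "P ` cube \<inter> {x. ?c \<bullet> x = ?M} \<subseteq> P ` cubeD (Dg g)"
    proof
      fix x assume "x \<in> P ` cube \<inter> {x. ?c \<bullet> x = ?M}"
      then obtain y where y: "y \<in> cube" "x = P y" "?c \<bullet> x = ?M" by blast
      then have "?c \<bullet> y = ?M" using cy[of y] by simp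
      then have "y \<in> cubeD (Dg g)" using eq[OF y(1)] by blast
      then show "x \<in> P ` cubeD (Dg g)" using y(2) by blast
    qed
  next
    show "P ` cubeD (Dg g) \<subseteq> P ` cube \<inter> {x. ?c \<bullet> x = ?M}"
    proof
      fix x assume "x \<in> P ` cubeD (Dg g)"
      then obtain y where y: "y \<in> cubeD (Dg g)" "x = P y" by blast
      have yc: "y \<in> cube" using y sub by blast
      then have "?c \<bullet> y = ?M" using eq[OF yc] y by blast
      then have "?c \<bullet> x = ?M" using cy[of y] y by simp
      then show "x \<in> P ` cube \<inter> {x. ?c \<bullet> x = ?M}" using y yc by blast
    qed
  qed
qed

lemma sgnv_in_cubeD: "sgnv (cobound hed tal g) \<in> cubeD (Dg g)"
  using Dg_char[OF sgnv_cube, of "cobound hed tal g" g] cube_eq[OF sgnv_cube, of "cobound hed tal g"]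
    sgnv_max[of "cobound hed tal g"] by simp

lemma face_Dg:
  assumes P: "isproj (cut_space hed tal) P"
  shows "P ` cubeD (Dg g) \<in> nonempty_faces (voronoi_cell hed tal 0)"
proof -
  have lin: "linear P" using P by (simp add: isproj_def)
  have "convex (voronoi_cell hed tal 0)" unfolding V_eq[OF P] by (rule convex_P_cube[OF lin])
  then have "(voronoi_cell hed tal 0 \<inter> {x. cobound hed tal g \<bullet> x = (\<Sum>e\<in>UNIV. \<bar>cobound hed tal g $ e\<bar>)/2})
       face_of voronoi_cell hed tal 0"
    using face_formula(1)[OF P, of g] by (intro face_of_Int_supporting_hyperplane_le) auto
  moreover have "P ` cubeD (Dg g) \<noteq> {}" using sgnv_in_cubeD[of g] by blast
  ultimately show ?thesis unfolding nonempty_faces_def face_formula(2)[OF P] by simp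
qed

lemma face_is_Dg:
  assumes P: "isproj (cut_space hed tal) P" and F: "F \<in> nonempty_faces (voronoi_cell hed tal 0)"
  shows "\<exists>g. F = P ` cubeD (Dg g)"
proof -
  have lin: "linear P" using P by (simp add: isproj_def)
  have poly: "polyhedron (voronoi_cell hed tal 0)"
    unfolding V_eq[OF P] by (intro polytope_imp_polyhedron polytope_P_cube lin)
  from F have Ff: "F face_of voronoi_cell hed tal 0" "F \<noteq> {}" by (auto simp: nonempty_faces_def)
  then have "F exposed_face_of voronoi_cell hed tal 0" using exposed_face_of_polyhedron[OF poly] by blast
  then obtain a b where ab: "voronoi_cell hed tal 0 \<subseteq> {x. a \<bullet> x \<le> b}"
      "F = voronoi_cell hed tal 0 \<inter> {x. a \<bullet> x = b}"
    by (auto simp: exposed_face_of_def)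
  have PaK: "P a \<in> cut_space hed tal" using P by (simp add: isproj_def)
  then obtain g where g: "P a = cobound hed tal g" by (auto simp: cut_space_def)
  let ?c = "cobound hed tal g"
  let ?M = "(\<Sum>e\<in>UNIV. \<bar>cobound hed tal g $ e\<bar>)/2"
  have ax: "a \<bullet> x = ?c \<bullet> x" if "x \<in> voronoi_cell hed tal 0" for x
  proof -
    have "x \<bullet> P a = x \<bullet> a" using proj_inner[OF P V_sub_K[OF that]] .
    then show ?thesis by (simp add: g inner_commute)
  qed
  obtain x0 where x0: "x0 \<in> F" using Ff by blast
  then have x0V: "x0 \<in> voronoi_cell hed tal 0" and bx0: "?c \<bullet> x0 = b" using ab ax by auto
  have "P (sgnv ?c) \<in> voronoi_cell hed tal 0" using V_eq[OF P] sgnv_cube by blast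
  moreover have "?c \<bullet> P (sgnv ?c) = ?M"
    using proj_inner[OF P, of ?c "sgnv ?c"] sgnv_max[of ?c] by (auto simp: cut_space_def)
  ultimately have "?M \<le> b" using ab ax by force
  moreover have "b \<le> ?M" using face_formula(1)[OF P, of g] x0V bx0 by auto
  ultimately have bM: "b = ?M" by simp
  have "F = voronoi_cell hed tal 0 \<inter> {x. ?c \<bullet> x = ?M}" using ab(2) ax bM by auto
  then show ?thesis using face_formula(2)[OF P, of g] by auto
qed

lemma cubeD_anti: "D2 \<subseteq> D1 \<Longrightarrow> cubeD D1 \<subseteq> cubeD D2"
  by (auto simp: cubeD_def)

lemma order_Dg:
  assumes P: "isproj (cut_space hed tal) P"
  shows "P ` cubeD (Dg g1) \<subseteq> P ` cubeD (Dg g2) \<longleftrightarrow> Dg g2 \<subseteq> Dg g1"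
proof
  assume "Dg g2 \<subseteq> Dg g1"
  then show "P ` cubeD (Dg g1) \<subseteq> P ` cubeD (Dg g2)" using cubeD_anti by blast
next
  assume sub: "P ` cubeD (Dg g1) \<subseteq> P ` cubeD (Dg g2)"
  let ?c1 = "cobound hed tal g1" and ?c2 = "cobound hed tal g2"
  let ?y = "sgnv ?c1"
  have "P ?y \<in> P ` cubeD (Dg g2)" using sub sgnv_in_cubeD[of g1] by blast
  then have "?c2 \<bullet> P ?y = (\<Sum>e\<in>UNIV. \<bar>?c2 $ e\<bar>)/2" using face_formula(2)[OF P, of g2] by blast
  moreover have "?c2 \<bullet> P ?y = ?c2 \<bullet> ?y" using proj_inner[OF P, of ?c2 ?y] by (auto simp: cut_space_def)
  ultimately have "?y \<in> cubeD (Dg g2)"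
    using cube_eq[OF sgnv_cube, of ?c2 ?c1] Dg_char[OF sgnv_cube, of ?c1 g2] by simp
  then have yv: "?y $ e = (if b then 1/2 else -1/2)" if "(e, b) \<in> Dg g2" for e b
    using that by (auto simp: cubeD_def)
  show "Dg g2 \<subseteq> Dg g1"
  proof (clarify)
    fix e b assume "(e, b) \<in> Dg g2"
    then have "sgn (?c1 $ e) / 2 = (if b then 1/2 else -1/2)" using yv by (simp add: sgnv_def)
    then have "if b then ?c1 $ e > 0 else ?c1 $ e < 0"
      by (cases b) (auto simp: sgn_if split: if_splits)
    then show "(e, b) \<in> Dg g1" using Dg_mem[of e b g1] by simp
  qed
qed


lemma CAC_imp_Dg:
  assumes "coherent_acyclic hed tal D"
  shows "\<exists>g. D = Dg g"
proof -
  obtain Ps :: "'v set list" where Ps: "Ps \<noteq> []" "\<forall>i<length Ps. Ps ! i \<noteq> {}"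
      "\<forall>i<length Ps. \<forall>j<length Ps. i \<noteq> j \<longrightarrow> Ps ! i \<inter> Ps ! j = {}"
      "\<Union>(set Ps) = UNIV"
      "D = {oe. \<exists>i j. i < j \<and> j < length Ps \<and> oe_tail hed tal oe \<in> Ps ! i \<and> oe_head hed tal oe \<in> Ps ! j}"
    using assms unfolding coherent_acyclic_def by blast
  have ex: "\<exists>i. i < length Ps \<and> v \<in> Ps ! i" for v
  proof -
    have "v \<in> \<Union>(set Ps)" using Ps(4) by simp
    then obtain X where "X \<in> set Ps" "v \<in> X" by blast
    then show ?thesis by (metis in_set_conv_nth)
  qed
  have un: "i = j" if "i < length Ps" "v \<in> Ps ! i" "j < length Ps" "v \<in> Ps ! j" for i j v
    using Ps(3) that by blast
  define idx where "idx v = (THE i. i < length Ps \<and> v \<in> Ps ! i)" for v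
  have idx: "idx v < length Ps \<and> v \<in> Ps ! idx v" for v
    unfolding idx_def by (rule theI') (use ex un in blast)
  have idx_un: "i < length Ps \<Longrightarrow> v \<in> Ps ! i \<Longrightarrow> i = idx v" for i v
    using idx un by blast
  define g where "g v = real (idx v)" for v
  have "D = Dg g"
  proof (rule set_eqI)
    fix oe
    show "oe \<in> D \<longleftrightarrow> oe \<in> Dg g"
    proof
      assume "oe \<in> D"
      then obtain i j where "i < j" "j < length Ps" "oe_tail hed tal oe \<in> Ps ! i" "oe_head hed tal oe \<in> Ps ! j"
        using Ps(5) by blast
      then have "idx (oe_tail hed tal oe) < idx (oe_head hed tal oe)"
        using idx_un by (metis order.strict_trans)
      then show "oe \<in> Dg g" by (simp add: Dg_def g_def)
    next
      assume "oe \<in> Dg g"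
      then have "idx (oe_tail hed tal oe) < idx (oe_head hed tal oe)" by (simp add: Dg_def g_def)
      then show "oe \<in> D" using Ps(5) idx by blast
    qed
  qed
  then show ?thesis by blast
qed

lemma Dg_CAC: "coherent_acyclic hed tal (Dg g)"
proof -
  define vals where "vals = sorted_list_of_set (range g)"
  have fin: "finite (range g)" by simp
  have sv: "set vals = range g" unfolding vals_def using fin by simp
  have ss: "sorted_wrt (<) vals" using strict_sorted_list_of_set[of "range g"] by (simp add: vals_def)
  have dv: "distinct vals" unfolding vals_def by simp
  define Ps where "Ps = map (\<lambda>a. g -` {a}) vals"
  have len: "length Ps = length vals" by (simp add: Ps_def)
  have Psi: "i < length vals \<Longrightarrow> Ps ! i = g -` {vals ! i}" for i by (simp add: Ps_def)
  have mem: "i < length vals \<Longrightarrow> v \<in> Ps ! i \<longleftrightarrow> g v = vals ! i" for i v by (simp add: Psi)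
  have exi: "\<exists>i < length vals. vals ! i = g v" for v
    using sv by (metis in_set_conv_nth rangeI)
  show ?thesis unfolding coherent_acyclic_def
  proof (intro exI[of _ Ps] conjI allI impI)
    show "Ps \<noteq> []" using sv by (auto simp: Ps_def)
  next
    fix i assume "i < length Ps"
    then have i: "i < length vals" by (simp add: len)
    then have "vals ! i \<in> range g" using sv nth_mem by metis
    then show "Ps ! i \<noteq> {}" using Psi[OF i] by auto
  next
    fix i j assume "i < length Ps" "j < length Ps" "i \<noteq> j"
    then have "vals ! i \<noteq> vals ! j" using dv len by (simp add: nth_eq_iff_index_eq)
    then show "Ps ! i \<inter> Ps ! j = {}" using \<open>i < length Ps\<close> \<open>j < length Ps\<close> len Psi by auto
  next
    show "\<Union>(set Ps) = UNIV"
    proof (rule set_eqI)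
      fix v
      obtain i where "i < length vals" "vals ! i = g v" using exi by blast
      then have "Ps ! i \<in> set Ps" "v \<in> Ps ! i" using len mem by auto
      then show "v \<in> \<Union>(set Ps) \<longleftrightarrow> v \<in> UNIV" by blast
    qed
  next
    show "Dg g = {oe. \<exists>i j. i < j \<and> j < length Ps \<and> oe_tail hed tal oe \<in> Ps ! i \<and> oe_head hed tal oe \<in> Ps ! j}"
    proof (rule set_eqI)
      fix oe
      let ?t = "oe_tail hed tal oe" and ?h = "oe_head hed tal oe"
      show "oe \<in> Dg g \<longleftrightarrow> oe \<in> {oe. \<exists>i j. i < j \<and> j < length Ps \<and> oe_tail hed tal oe \<in> Ps ! i \<and> oe_head hed tal oe \<in> Ps ! j}"
      proof
        assume "oe \<in> Dg g"
        then have lt: "g ?t < g ?h" by (simp add: Dg_def)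
        obtain i where i: "i < length vals" "vals ! i = g ?t" using exi by blast
        obtain j where j: "j < length vals" "vals ! j = g ?h" using exi by blast
        have "i < j"
        proof (rule ccontr)
          assume "\<not> i < j"
          then have "j < i \<or> j = i" by auto
          then show False
          proof
            assume "j < i" then have "vals ! j < vals ! i" using sorted_wrt_nth_less[OF ss _ i(1)] by blast
            then show False using i j lt by simp
          next
            assume "j = i" then show False using i j lt by simp
          qed
        qed
        moreover have "?t \<in> Ps ! i" "?h \<in> Ps ! j" using i j mem by auto
        ultimately show "oe \<in> {oe. \<exists>i j. i < j \<and> j < length Ps \<and> oe_tail hed tal oe \<in> Ps ! i \<and> oe_head hed tal oe \<in> Ps ! j}"
          using j len by auto
      next
        assume "oe \<in> {oe. \<exists>i j. i < j \<and> j < length Ps \<and> oe_tail hed tal oe \<in> Ps ! i \<and> oe_head hed tal oe \<in> Ps ! j}"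
        then obtain i j where ij: "i < j" "j < length vals" "?t \<in> Ps ! i" "?h \<in> Ps ! j" using len by auto
        then have "g ?t = vals ! i" "g ?h = vals ! j" using mem by auto
        moreover have "vals ! i < vals ! j" using sorted_wrt_nth_less[OF ss ij(1,2)] .
        ultimately show "oe \<in> Dg g" by (simp add: Dg_def)
      qed
    qed
  qed
qed

lemma CAC_iff: "D \<in> CAC hed tal \<longleftrightarrow> (\<exists>g. D = Dg g)"
  unfolding CAC_def using CAC_imp_Dg Dg_CAC by blast

end

theorem mainTheorem12:
  fixes hed tal :: "'e::finite \<Rightarrow> 'v::finite"
  assumes "graph_connected hed tal"
  shows "\<exists>\<phi>. bij_betw \<phi> (nonempty_faces (voronoi_cell hed tal 0)) (CAC hed tal) \<and>
           (\<forall>F1\<in>nonempty_faces (voronoi_cell hed tal 0). \<forall>F2\<in>nonempty_faces (voronoi_cell hed tal 0).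
              F1 \<subseteq> F2 \<longleftrightarrow> cac_le (\<phi> F1) (\<phi> F2))"
proof -
  obtain P where P: "isproj (cut_space hed tal) P" using proj_exists[OF subspace_K] by blast
  define NF where "NF = nonempty_faces (voronoi_cell hed tal 0)"
  define \<Phi> where "\<Phi> D = P ` cubeD D" for D
  have face: "\<Phi> D \<in> NF" if "D \<in> CAC hed tal" for D
  proof -
    from CAC_iff[THEN iffD1, OF that] obtain g where "D = Dg hed tal g" ..
    then show ?thesis using face_Dg[OF P, of g] unfolding \<Phi>_def NF_def by simp
  qed
  have ex: "\<exists>D. D \<in> CAC hed tal \<and> F = \<Phi> D" if "F \<in> NF" for F
  proof -
    from face_is_Dg[OF P that[unfolded NF_def]] obtain g where "F = P ` cubeD (Dg hed tal g)" ..
    moreover have "Dg hed tal g \<in> CAC hed tal" by (simp add: CAC_def Dg_CAC)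
    ultimately show ?thesis unfolding \<Phi>_def by blast
  qed
  have ord: "\<Phi> D1 \<subseteq> \<Phi> D2 \<longleftrightarrow> D2 \<subseteq> D1" if "D1 \<in> CAC hed tal" "D2 \<in> CAC hed tal" for D1 D2
  proof -
    from CAC_iff[THEN iffD1, OF that(1)] obtain g1 where "D1 = Dg hed tal g1" ..
    moreover from CAC_iff[THEN iffD1, OF that(2)] obtain g2 where "D2 = Dg hed tal g2" ..
    ultimately
    show ?thesis unfolding \<Phi>_def using order_Dg[OF P] by simp
  qed
  define \<phi> where "\<phi> F = (SOME D. D \<in> CAC hed tal \<and> F = \<Phi> D)" for F
  have \<phi>: "\<phi> F \<in> CAC hed tal \<and> F = \<Phi> (\<phi> F)" if "F \<in> NF" for F
    unfolding \<phi>_def using someI_ex[OF ex[OF that]] .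
  have inj: "inj_on \<phi> NF"
  proof (rule inj_onI)
    fix F1 F2 assume "F1 \<in> NF" "F2 \<in> NF" "\<phi> F1 = \<phi> F2"
    then have "\<Phi> (\<phi> F1) = \<Phi> (\<phi> F2)" by simp
    moreover have "F1 = \<Phi> (\<phi> F1)" using \<phi>[OF \<open>F1 \<in> NF\<close>] by blast
    moreover have "F2 = \<Phi> (\<phi> F2)" using \<phi>[OF \<open>F2 \<in> NF\<close>] by blast
    ultimately show "F1 = F2" by (simp only:)
  qed
  have img: "\<phi> ` NF = CAC hed tal"
  proof
    show "\<phi> ` NF \<subseteq> CAC hed tal" using \<phi> by blast
  next
    show "CAC hed tal \<subseteq> \<phi> ` NF"
    proof
      fix D assume D: "D \<in> CAC hed tal"
      have F: "\<Phi> D \<in> NF" by (rule face[OF D])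
      have "\<Phi> (\<phi> (\<Phi> D)) = \<Phi> D" using \<phi>[OF F] by (elim conjE) (rule sym)
      have c1: "\<phi> (\<Phi> D) \<in> CAC hed tal" using \<phi>[OF F] by blast
      have "\<phi> (\<Phi> D) \<subseteq> D" using ord[OF D c1] \<open>\<Phi> (\<phi> (\<Phi> D)) = \<Phi> D\<close> by simp
      moreover have "D \<subseteq> \<phi> (\<Phi> D)" using ord[OF c1 D] \<open>\<Phi> (\<phi> (\<Phi> D)) = \<Phi> D\<close> by simp
      ultimately have "\<phi> (\<Phi> D) = D" by blast
      then show "D \<in> \<phi> ` NF" by (rule image_eqI[OF sym F])
    qed
  qed
  have "\<forall>F1\<in>NF. \<forall>F2\<in>NF. F1 \<subseteq> F2 \<longleftrightarrow> cac_le (\<phi> F1) (\<phi> F2)"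
  proof (intro ballI)
    fix F1 F2 assume F: "F1 \<in> NF" "F2 \<in> NF"
    have a1: "\<phi> F1 \<in> CAC hed tal" "F1 = \<Phi> (\<phi> F1)" using \<phi>[OF F(1)] by blast+
    have a2: "\<phi> F2 \<in> CAC hed tal" "F2 = \<Phi> (\<phi> F2)" using \<phi>[OF F(2)] by blast+
    have "F1 \<subseteq> F2 \<longleftrightarrow> \<Phi> (\<phi> F1) \<subseteq> \<Phi> (\<phi> F2)" by (simp only: a1(2)[symmetric] a2(2)[symmetric])
    also have "\<dots> \<longleftrightarrow> \<phi> F2 \<subseteq> \<phi> F1" by (rule ord[OF a1(1) a2(1)])
    finally show "F1 \<subseteq> F2 \<longleftrightarrow> cac_le (\<phi> F1) (\<phi> F2)" by (simp add: cac_le_def)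
  qed
  then show ?thesis using inj img unfolding bij_betw_def NF_def by blast
qed

end
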